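(* Fix $n$ and let $\mathbf{A}\mathbf{x}=\mathbf{b}$ be the linear system described in the context, and let $\mathbf{x}^{RSD}$ be the vector representing random serial dictatorship (so $\mathbf{A}\mathbf{x}^{RSD}=\mathbf{b}$). Let $\mathbf{y}\neq\mathbf{x}^{RSD}$ be any solution of $\mathbf{A}\mathbf{x}=\mathbf{b}$. Then there exists $\lambda>0$ such that $\lambda\mathbf{y}+(1-\lambda)\mathbf{x}^{RSD}$ represents an assignment rule (i.e. all entries are nonnegative, so each $f(R)$ is bistochastic) which satisfies equal treatment of equals, support efficiency and localizedness, and which differs from RSD.
   Context: Let $N$ be a set of $n$ agents and $H$ a set of $n$ houses. A preference profile $R$ assigns to each agent a strict linear order $\succ_i$ over $H$; $\mathcal{R}$ is the set of all $n!^n$ profiles. An assignment rule $f$ maps each profile to a bistochastic $n\times n$ matrix; $f(R,i,h)$ is the probability that agent $i$ gets house $h$. Such a rule is identified with the vector $\mathbf{x}\in\mathbb{R}^{n^2n!^n}$ with $\mathbf{x}_{(R,i,h)}=f(R,i,h)$. For a priority order $\pi$ of the agents, serial dictatorship $SD_\pi$ lets agents in order $\pi$ successively take their most preferred remaining house, and $RSD(R)=\frac1{n!}\sum_\pi SD_\pi(R)$. Properties: support efficiency: $RSD(R,i,h)=0\Rightarrow f(R,i,h)=0$; localizedness: whenever $R'$ arises from $R$ by agent $i$ swapping two houses $h_k,h_l$ that are adjacent in $\succ_i$ (all other agents unchanged), $f(R,i,h)=f(R',i,h)$ for all $h\notin\{h_k,h_l\}$; equal treatment of equals: $\succ_i=\succ_j$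 implies $f(R,i,h)=f(R,j,h)$ for all $h$. The system $\mathbf{A}\mathbf{x}=\mathbf{b}$ (with unknown $\mathbf{x}\in\mathbb{R}^{n^2n!^n}$ indexed by triples $(R,i,h)$) consists exactly of the following equations: (1) $\sum_{h\in H}\mathbf{x}_{(R,i,h)}=1$ for every $R,i$, and $\sum_{i\in N}\mathbf{x}_{(R,i,h)}=1$ for every $R,h$; (2) $\mathbf{x}_{(R,i,h)}=0$ for every $(R,i,h)$ with $RSD(R,i,h)=0$; (3) $\mathbf{x}_{(R,i,h)}-\mathbf{x}_{(R',i,h)}=0$ for every $R$, $i$, every profile $R'$ obtained from $R$ by agent $i$ swapping two adjacent houses in her ranking, and every house $h$ not among the two swapped houses; (4) $\mathbf{x}_{(R,i,h)}-\mathbf{x}_{(R,j,h)}=0$ for every $R$, $h$ and agents $i\neq j$ with $\succ_i=\succ_j$. *)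

theory Defs
  imports Complex_Main
begin

text \<open>Agents and houses are both encoded as the natural numbers 0..n-1.
A strict preference order of an agent is a list of all houses (a permutation of
[0..<n]), most preferred first. A profile is a list of n such preference lists
(entry i = preference of agent i). A (candidate) assignment rule / vector x is
a function profile => agent => house => real; only the coordinates (R,i,h) with
R a profile and i,h < n are meaningful (these are exactly the n^2 n!^n
coordinates of the vector in the paper).\<close>

type_synonym pref = "nat list"
type_synonym profile = "nat list list"
type_synonym vec = "profile \<Rightarrow> nat \<Rightarrow> nat \<Rightarrow> real"

definition is_pref :: "nat \<Rightarrow> pref \<Rightarrow> bool" where
  "is_pref n p \<longleftrightarrow> distinct p \<and> set p = {..<n}"

definition profiles :: "nat \<Rightarrow> profile set" where
  "profiles n = {R. length R = n \<and> (\<forall>i<n. is_pref n (R ! i))}"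

text \<open>Priority orders of agents: permutations of the agents, first = highest priority.\<close>
definition priority_orders :: "nat \<Rightarrow> nat list set" where
  "priority_orders n = {\<pi>. distinct \<pi> \<and> set \<pi> = {..<n}}"

fun sd_aux :: "nat list \<Rightarrow> profile \<Rightarrow> nat set \<Rightarrow> (nat \<times> nat) list" where
  "sd_aux [] R T = []"
| "sd_aux (i # is) R T =
     (let h = hd (filter (\<lambda>h. h \<notin> T) (R ! i)) in (i, h) # sd_aux is R (insert h T))"

definition SD :: "nat list \<Rightarrow> vec" where
  "SD \<pi> R i h = (if (i, h) \<in> set (sd_aux \<pi> R {}) then 1 else 0)"

definition RSD :: "nat \<Rightarrow> vec" where
  "RSD n R i h = (\<Sum>\<pi>\<in>priority_orders n. SD \<pi> R i h) / fact n"

definition swap_adj :: "pref \<Rightarrow> nat \<Rightarrow> pref" where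
  "swap_adj p k = p[k := p ! Suc k, Suc k := p ! k]"

definition swap_profile :: "profile \<Rightarrow> nat \<Rightarrow> nat \<Rightarrow> profile" where
  "swap_profile R i k = R[i := swap_adj (R ! i) k]"

definition eq_bistochastic :: "nat \<Rightarrow> vec \<Rightarrow> bool" where
  "eq_bistochastic n x \<longleftrightarrow>
     (\<forall>R\<in>profiles n. \<forall>i<n. (\<Sum>h<n. x R i h) = 1) \<and>
     (\<forall>R\<in>profiles n. \<forall>h<n. (\<Sum>i<n. x R i h) = 1)"

definition eq_support :: "nat \<Rightarrow> vec \<Rightarrow> bool" where
  "eq_support n x \<longleftrightarrow>
     (\<forall>R\<in>profiles n. \<forall>i<n. \<forall>h<n. RSD n R i h = 0 \<longrightarrow> x R i h = 0)"

definition eq_local :: "nat \<Rightarrow> vec \<Rightarrow> bool" where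
  "eq_local n x \<longleftrightarrow>
     (\<forall>R\<in>profiles n. \<forall>i<n. \<forall>k. Suc k < n \<longrightarrow>
        (\<forall>h<n. h \<noteq> R ! i ! k \<and> h \<noteq> R ! i ! Suc k \<longrightarrow>
           x R i h - x (swap_profile R i k) i h = 0))"

definition eq_ete :: "nat \<Rightarrow> vec \<Rightarrow> bool" where
  "eq_ete n x \<longleftrightarrow>
     (\<forall>R\<in>profiles n. \<forall>h<n. \<forall>i<n. \<forall>j<n. i \<noteq> j \<and> R ! i = R ! j \<longrightarrow>
        x R i h - x R j h = 0)"

definition solves_system :: "nat \<Rightarrow> vec \<Rightarrow> bool" where
  "solves_system n x \<longleftrightarrow> eq_bistochastic n x \<and> eq_support n x \<and> eq_local n x \<and> eq_ete n x"

definition differs :: "nat \<Rightarrow> vec \<Rightarrow> vec \<Rightarrow> bool" where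
  "differs n x y \<longleftrightarrow> (\<exists>R\<in>profiles n. \<exists>i<n. \<exists>h<n. x R i h \<noteq> y R i h)"

definition bistochastic :: "nat \<Rightarrow> (nat \<Rightarrow> nat \<Rightarrow> real) \<Rightarrow> bool" where
  "bistochastic n M \<longleftrightarrow> (\<forall>i<n. \<forall>h<n. M i h \<ge> 0) \<and>
     (\<forall>i<n. (\<Sum>h<n. M i h) = 1) \<and> (\<forall>h<n. (\<Sum>i<n. M i h) = 1)"

definition assignment_rule :: "nat \<Rightarrow> vec \<Rightarrow> bool" where
  "assignment_rule n f \<longleftrightarrow> (\<forall>R\<in>profiles n. bistochastic n (f R))"

definition support_efficient :: "nat \<Rightarrow> vec \<Rightarrow> bool" where
  "support_efficient n f \<longleftrightarrow>
     (\<forall>R\<in>profiles n. \<forall>i<n. \<forall>h<n. RSD n R i h = 0 \<longrightarrow> f R i h = 0)"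

definition localized :: "nat \<Rightarrow> vec \<Rightarrow> bool" where
  "localized n f \<longleftrightarrow>
     (\<forall>R\<in>profiles n. \<forall>i<n. \<forall>k. Suc k < n \<longrightarrow>
        (\<forall>h<n. h \<notin> {R ! i ! k, R ! i ! Suc k} \<longrightarrow> f R i h = f (swap_profile R i k) i h))"

definition equal_treatment :: "nat \<Rightarrow> vec \<Rightarrow> bool" where
  "equal_treatment n f \<longleftrightarrow>
     (\<forall>R\<in>profiles n. \<forall>i<n. \<forall>j<n. R ! i = R ! j \<longrightarrow> (\<forall>h<n. f R i h = f R j h))"

end

theory Submission
  imports Defs "HOL-Combinatorics.Multiset_Permutations"
begin

lemma sd_fst: "map fst (sd_aux \<pi> R T) = \<pi>"
  by (induction \<pi> arbitrary: T) (auto simp: Let_def)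

lemma sd_snd:
  assumes "\<forall>a\<in>set \<pi>. is_pref n (R!a)" "finite T" "T \<subseteq> {..<n}" "card T + length \<pi> \<le> n"
  shows "distinct (map snd (sd_aux \<pi> R T)) \<and> set (map snd (sd_aux \<pi> R T)) \<subseteq> {..<n} - T"
  using assms
proof (induction \<pi> arbitrary: T)
  case Nil then show ?case by simp
next
  case (Cons a \<pi>)
  define h where "h = hd (filter (\<lambda>h. h \<notin> T) (R ! a))"
  have "card T < card {..<n}" using Cons.prems by simp
  then have "\<not> {..<n} \<subseteq> T" using Cons.prems card_mono by (metis finite_lessThan leD)
  then obtain x where x: "x < n" "x \<notin> T" by auto
  have pa: "is_pref n (R!a)" using Cons.prems by simp
  then have "x \<in> set (R!a)" using x unfolding is_pref_def by auto
  then have "filter (\<lambda>h. h \<notin> T) (R ! a) \<noteq> []" using x by (metis (mono_tags) filter_empty_conv)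
  then have "h \<in> set (filter (\<lambda>h. h \<notin> T) (R ! a))" unfolding h_def using list.set_sel(1) by blast
  then have hT: "h \<notin> T" "h < n" using pa unfolding is_pref_def by auto
  have IH: "distinct (map snd (sd_aux \<pi> R (insert h T))) \<and> set (map snd (sd_aux \<pi> R (insert h T))) \<subseteq> {..<n} - insert h T"
    apply (rule Cons.IH) using Cons.prems hT by auto
  show ?case using IH hT by (auto simp: Let_def h_def[symmetric])
qed

lemma fin_prof: "finite (profiles n)"
proof -
  have "profiles n \<subseteq> {xs. set xs \<subseteq> {p. set p \<subseteq> {..<n} \<and> length p = n} \<and> length xs = n}"
  proof
    fix R assume R: "R \<in> profiles n"
    have "set R \<subseteq> {p. set p \<subseteq> {..<n} \<and> length p = n}"
    proof
      fix p assume "p \<in> set R"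
      then obtain i where "i < length R" "p = R ! i" by (auto simp: in_set_conv_nth)
      then have "distinct p" "set p = {..<n}" using R unfolding profiles_def is_pref_def by auto
      then show "p \<in> {p. set p \<subseteq> {..<n} \<and> length p = n}" using distinct_card by fastforce
    qed
    then show "R \<in> {xs. set xs \<subseteq> {p. set p \<subseteq> {..<n} \<and> length p = n} \<and> length xs = n}"
      using R unfolding profiles_def by auto
  qed
  moreover have "finite {xs. set xs \<subseteq> {p. set p \<subseteq> {..<n} \<and> length p = n} \<and> length xs = n}"
    by (intro finite_lists_length_eq) (simp add: finite_lists_length_eq)
  ultimately show ?thesis by (rule finite_subset)
qed

lemma card_po: "card (priority_orders n) = fact n"
  and fin_po: "finite (priority_orders n)"
proof -
  have "priority_orders n = permutations_of_set {..<n}"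
    unfolding priority_orders_def permutations_of_set_def by auto
  then show "card (priority_orders n) = fact n" "finite (priority_orders n)" by simp_all
qed

lemma sd_graph:
  assumes "\<pi> \<in> priority_orders n" "R \<in> profiles n"
  defines "L \<equiv> sd_aux \<pi> R {}"
  shows "distinct (map fst L)" "distinct (map snd L)" "set (map fst L) = {..<n}" "set (map snd L) = {..<n}"
proof -
  have p: "distinct \<pi>" "set \<pi> = {..<n}" using assms(1) unfolding priority_orders_def by auto
  then have len: "length \<pi> = n" using distinct_card by fastforce
  have "distinct (map snd L) \<and> set (map snd L) \<subseteq> {..<n} - {}"
    unfolding L_def apply (rule sd_snd) using assms(2) p len unfolding profiles_def by auto
  moreover have "length (map snd L) = n" using sd_fst[of \<pi> R "{}"] len unfolding L_def
    by (metis length_map)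
  ultimately show "distinct (map snd L)" "set (map snd L) = {..<n}"
    by (simp, metis Diff_empty card_lessThan card_subset_eq distinct_card finite_lessThan)
  show "distinct (map fst L)" "set (map fst L) = {..<n}" using p sd_fst unfolding L_def by auto
qed

lemma SD_row:
  assumes "\<pi> \<in> priority_orders n" "R \<in> profiles n" "i < n"
  shows "(\<Sum>h<n. SD \<pi> R i h) = 1"
proof -
  define L where "L = sd_aux \<pi> R {}"
  note g = sd_graph[OF assms(1,2), folded L_def]
  have "i \<in> fst ` set L" using g(3) assms(3) by (metis list.set_map lessThan_iff)
  then obtain h0 where h0: "(i, h0) \<in> set L" by force
  have "h0 < n" using h0 g(4) by force
  have "SD \<pi> R i h = (if h = h0 then 1 else 0)" for h
  proof -
    have "(i, h) \<in> set L \<longleftrightarrow> h = h0"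
      using h0 g(1) by (metis distinct_map fst_conv inj_on_contraD prod.inject)
    then show ?thesis unfolding SD_def L_def[symmetric] by simp
  qed
  then show ?thesis using \<open>h0 < n\<close> by simp
qed

lemma SD_col:
  assumes "\<pi> \<in> priority_orders n" "R \<in> profiles n" "h < n"
  shows "(\<Sum>i<n. SD \<pi> R i h) = 1"
proof -
  define L where "L = sd_aux \<pi> R {}"
  note g = sd_graph[OF assms(1,2), folded L_def]
  have "h \<in> snd ` set L" using g(4) assms(3) by (metis list.set_map lessThan_iff)
  then obtain i0 where i0: "(i0, h) \<in> set L" by force
  have "i0 < n" using i0 g(3) by force
  have "SD \<pi> R i h = (if i = i0 then 1 else 0)" for i
  proof -
    have "(i, h) \<in> set L \<longleftrightarrow> i = i0"
      using i0 g(2) by (metis distinct_map snd_conv inj_on_contraD prod.inject)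
    then show ?thesis unfolding SD_def L_def[symmetric] by simp
  qed
  then show ?thesis using \<open>i0 < n\<close> by simp
qed

lemma RSD_row:
  assumes "R \<in> profiles n" "i < n"
  shows "(\<Sum>h<n. RSD n R i h) = 1"
proof -
  have "(\<Sum>h<n. RSD n R i h) = (\<Sum>\<pi>\<in>priority_orders n. \<Sum>h<n. SD \<pi> R i h) / fact n"
    unfolding RSD_def by (simp add: sum_divide_distrib[symmetric] sum.swap[of _ "{..<n}"])
  also have "\<dots> = card (priority_orders n) / fact n" using SD_row assms by simp
  finally show ?thesis by (simp add: card_po)
qed

lemma RSD_col:
  assumes "R \<in> profiles n" "h < n"
  shows "(\<Sum>i<n. RSD n R i h) = 1"
proof -
  have "(\<Sum>i<n. RSD n R i h) = (\<Sum>\<pi>\<in>priority_orders n. \<Sum>i<n. SD \<pi> R i h) / fact n"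
    unfolding RSD_def by (simp add: sum_divide_distrib[symmetric] sum.swap[of _ "{..<n}"])
  also have "\<dots> = card (priority_orders n) / fact n" using SD_col assms by simp
  finally show ?thesis by (simp add: card_po)
qed

lemma RSD_nonneg: "RSD n R i h \<ge> 0"
  unfolding RSD_def SD_def by (intro divide_nonneg_pos sum_nonneg) auto

lemma RSD_pos: assumes "RSD n R i h \<noteq> 0" shows "RSD n R i h \<ge> 1 / fact n"
proof -
  have "(\<Sum>\<pi>\<in>priority_orders n. SD \<pi> R i h) \<noteq> 0" using assms unfolding RSD_def by auto
  moreover have "(\<Sum>\<pi>\<in>priority_orders n. SD \<pi> R i h) = real (card {\<pi>\<in>priority_orders n. (i,h) \<in> set (sd_aux \<pi> R {})})"
    unfolding SD_def by (simp add: sum.If_cases[OF fin_po] Int_def conj_commute)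
  ultimately have "(\<Sum>\<pi>\<in>priority_orders n. SD \<pi> R i h) \<ge> 1" by simp
  then show ?thesis unfolding RSD_def by (simp add: divide_right_mono)
qed

definition sw :: "nat \<Rightarrow> nat \<Rightarrow> nat \<Rightarrow> nat" where
  "sw i j x = (if x = i then j else if x = j then i else x)"

lemma sw_sw[simp]: "sw i j (sw i j x) = x" unfolding sw_def by auto

lemma sd_sw:
  assumes "R ! i = R ! j"
  shows "sd_aux (map (sw i j) \<pi>) R T = map (\<lambda>(a,h). (sw i j a, h)) (sd_aux \<pi> R T)"
proof -
  have "R ! (sw i j a) = R ! a" for a using assms unfolding sw_def by auto
  then show ?thesis by (induction \<pi> arbitrary: T) (auto simp: Let_def)
qed

lemma SD_sw:
  assumes "R ! i = R ! j"
  shows "SD (map (sw i j) \<pi>) R j h = SD \<pi> R i h"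
proof -
  have "(j, h) \<in> (\<lambda>(a,h). (sw i j a, h)) ` set (sd_aux \<pi> R {}) \<longleftrightarrow> (i, h) \<in> set (sd_aux \<pi> R {})"
    by (force simp: sw_def split: if_splits)
  then show ?thesis unfolding SD_def sd_sw[OF assms] by simp
qed

lemma RSD_ete:
  assumes "R ! i = R ! j" "i < n" "j < n"
  shows "RSD n R i h = RSD n R j h"
proof -
  have "(\<Sum>\<pi>\<in>priority_orders n. SD \<pi> R i h) = (\<Sum>\<pi>\<in>priority_orders n. SD (map (sw i j) \<pi>) R j h)"
    using SD_sw[OF assms(1)] by simp
  also have "\<dots> = (\<Sum>\<pi>\<in>priority_orders n. SD \<pi> R j h)"
  proof (rule sum.reindex_bij_witness[where i="map (sw i j)" and j="map (sw i j)"])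
    have bij: "sw i j ` {..<n} = {..<n}"
    proof -
      have "sw i j ` {..<n} \<subseteq> {..<n}" using assms unfolding sw_def by auto
      moreover have "{..<n} \<subseteq> sw i j ` {..<n}"
      proof
        fix x assume "x \<in> {..<n}"
        then have "sw i j x \<in> {..<n}" using assms unfolding sw_def by auto
        then show "x \<in> sw i j ` {..<n}" by (metis sw_sw image_eqI)
      qed
      ultimately show ?thesis by blast
    qed
    have inj: "inj (sw i j)" by (metis injI sw_sw)
    show "map (sw i j) \<pi> \<in> priority_orders n" if "\<pi> \<in> priority_orders n" for \<pi>
      using that bij inj unfolding priority_orders_def by (auto simp: distinct_map intro: inj_on_subset[OF inj])
    show "map (sw i j) \<pi> \<in> priority_orders n" if "\<pi> \<in> priority_orders n" for \<pi>
      using that bij inj unfolding priority_orders_def by (auto simp: distinct_map intro: inj_on_subset[OF inj])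
  qed (auto simp: comp_def)
  finally show ?thesis unfolding RSD_def by simp
qed

lemma hd_filter_swap:
  assumes "h \<noteq> a" "h \<noteq> b"
  shows "hd (filter P (xs @ a # b # ys)) = h \<longleftrightarrow> hd (filter P (xs @ b # a # ys)) = h"
  using assms by (cases "filter P xs") auto

lemma swap_adj_decomp:
  assumes "Suc k < length p"
  shows "p = take k p @ p ! k # p ! Suc k # drop (Suc (Suc k)) p"
    "swap_adj p k = take k p @ p ! Suc k # p ! k # drop (Suc (Suc k)) p"
proof -
  show 1: "p = take k p @ p ! k # p ! Suc k # drop (Suc (Suc k)) p"
    using assms by (metis Cons_nth_drop_Suc Suc_lessD append_take_drop_id)
  show "swap_adj p k = take k p @ p ! Suc k # p ! k # drop (Suc (Suc k)) p"
    unfolding swap_adj_def using assms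
    by (subst 1) (simp add: list_update_append nth_append)
qed

lemma sd_local:
  assumes "distinct \<pi>" "i < length R" "Suc k < length (R ! i)" "h \<noteq> R ! i ! k" "h \<noteq> R ! i ! Suc k"
  shows "(i, h) \<in> set (sd_aux \<pi> R T) \<longleftrightarrow> (i, h) \<in> set (sd_aux \<pi> (swap_profile R i k) T)"
  using assms(1)
proof (induction \<pi> arbitrary: T)
  case Nil then show ?case by simp
next
  case (Cons a \<pi>)
  show ?case
  proof (cases "a = i")
    case True
    have ni: "(i, h') \<notin> set (sd_aux \<pi> R' T')" for h' R' T'
      using Cons.prems True sd_fst[of \<pi> R' T'] by (metis distinct.simps(2) image_eqI fst_conv list.set_map)
    have e: "swap_profile R i k ! i = swap_adj (R ! i) k" unfolding swap_profile_def using assms by simp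
    have "hd (filter (\<lambda>h. h \<notin> T) (R ! i)) = h \<longleftrightarrow> hd (filter (\<lambda>h. h \<notin> T) (swap_adj (R ! i) k)) = h"
      using hd_filter_swap[OF assms(4,5), of "\<lambda>h. h \<notin> T" "take k (R ! i)" "drop (Suc (Suc k)) (R ! i)"]
        swap_adj_decomp[OF assms(3)] by metis
    then show ?thesis using True ni e by (auto simp: Let_def)
  next
    case False
    have e: "swap_profile R i k ! a = R ! a" unfolding swap_profile_def using False by simp
    show ?thesis using False Cons e by (auto simp: Let_def)
  qed
qed

lemma RSD_local:
  assumes "R \<in> profiles n" "i < n" "Suc k < n" "h \<noteq> R ! i ! k" "h \<noteq> R ! i ! Suc k"
  shows "RSD n R i h = RSD n (swap_profile R i k) i h"
proof -
  have "length R = n" "Suc k < length (R ! i)" using assms unfolding profiles_def is_pref_def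
    by (auto simp: distinct_card[symmetric])
  then have "SD \<pi> R i h = SD \<pi> (swap_profile R i k) i h" if "\<pi> \<in> priority_orders n" for \<pi>
    using sd_local[of \<pi> i R k h "{}"] that assms unfolding SD_def priority_orders_def by auto
  then show ?thesis unfolding RSD_def by simp
qed

theorem mainTheorem3:
  fixes n :: nat and y :: vec
  assumes "solves_system n y"
    and "differs n y (RSD n)"
  shows "\<exists>t::real. t > 0 \<and>
     (let f = (\<lambda>R i h. t * y R i h + (1 - t) * RSD n R i h) in
        assignment_rule n f \<and> equal_treatment n f \<and> support_efficient n f \<and>
        localized n f \<and> differs n f (RSD n))"
proof -
  have bi: "eq_bistochastic n y" and su: "eq_support n y" and lo: "eq_local n y" and et: "eq_ete n y"
    using assms(1) unfolding solves_system_def by auto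
  define S where "S = profiles n \<times> {..<n} \<times> {..<n}"
  have finS: "finite S" unfolding S_def using fin_prof by simp
  define B where "B = (\<Sum>(R,i,h)\<in>S. \<bar>y R i h\<bar>)"
  have B0: "B \<ge> 0" unfolding B_def by (intro sum_nonneg) auto
  have yB: "\<bar>y R i h\<bar> \<le> B" if "R \<in> profiles n" "i < n" "h < n" for R i h
  proof -
    have "(R,i,h) \<in> S" using that unfolding S_def by auto
    then show ?thesis unfolding B_def
      using member_le_sum[OF _ _ finS, of "(R,i,h)" "\<lambda>(R,i,h). \<bar>y R i h\<bar>"] by auto
  qed
  define F :: real where "F = fact n"
  have F0: "F > 0" unfolding F_def by simp
  define t where "t = 1 / (2 * F * (B + 1))"
  have t0: "t > 0" unfolding t_def using F0 B0 by simp
  have F1: "F \<ge> 1" unfolding F_def by simp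
  have "F * (B + 1) \<ge> 1 * 1" using F1 B0 by (intro mult_mono) auto
  then have "2 * F * (B + 1) \<ge> 2" by simp
  then have th: "t \<le> 1/2" unfolding t_def by (simp add: field_simps)
  define f where "f = (\<lambda>R i h. t * y R i h + (1 - t) * RSD n R i h)"
  have nonneg: "f R i h \<ge> 0" if R: "R \<in> profiles n" "i < n" "h < n" for R i h
  proof (cases "RSD n R i h = 0")
    case True
    then have "y R i h = 0" using su R unfolding eq_support_def by auto
    then show ?thesis using True unfolding f_def by simp
  next
    case False
    then have r: "RSD n R i h \<ge> 1 / F" using RSD_pos F_def by auto
    have "(1 - t) * RSD n R i h \<ge> (1/2) * (1 / F)"
      using r th F0 by (intro mult_mono) auto
    moreover have "t * \<bar>y R i h\<bar> \<le> t * B" using yB[OF R] t0 by simp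
    moreover have "t * B < (1/2) * (1 / F)"
    proof -
      have "t * B = (B / (B + 1)) * ((1/2) * (1 / F))" unfolding t_def using F0 B0 by (simp add: field_simps)
      moreover have "B / (B + 1) < 1" using B0 by simp
      moreover have "(1/2) * (1 / F) > 0" using F0 by simp
      moreover have "(B / (B + 1)) * ((1/2) * (1 / F)) < 1 * ((1/2) * (1 / F))"
        using calculation(2,3) by (rule mult_strict_right_mono)
      ultimately show ?thesis by simp
    qed
    moreover have "t * y R i h \<ge> - (t * \<bar>y R i h\<bar>)" using t0 by (simp add: abs_if)
    ultimately show ?thesis unfolding f_def by linarith
  qed
  have "assignment_rule n f"
    unfolding assignment_rule_def bistochastic_def
  proof (intro ballI conjI allI impI)
    fix R assume R: "R \<in> profiles n"
    show "0 \<le> f R i h" if "i < n" "h < n" for i h using nonneg R that by auto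
    show "(\<Sum>h<n. f R i h) = 1" if "i < n" for i
      using bi RSD_row[OF R that] R that unfolding f_def eq_bistochastic_def
      by (simp add: sum.distrib sum_distrib_left[symmetric])
    show "(\<Sum>i<n. f R i h) = 1" if "h < n" for h
      using bi RSD_col[OF R that] R that unfolding f_def eq_bistochastic_def
      by (simp add: sum.distrib sum_distrib_left[symmetric])
  qed
  moreover have "equal_treatment n f"
    unfolding equal_treatment_def
  proof (intro ballI allI impI)
    fix R i j h assume R: "R \<in> profiles n" and ij: "i < n" "j < n" "R ! i = R ! j" and h: "h < n"
    show "f R i h = f R j h"
    proof (cases "i = j")
      case False
      then have "y R i h - y R j h = 0" using et R ij h unfolding eq_ete_def by blast
      then have "y R i h = y R j h" by simp
      then show ?thesis unfolding f_def using RSD_ete[OF ij(3,1,2)] by simp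
    qed simp
  qed
  moreover have "support_efficient n f"
    using su unfolding support_efficient_def eq_support_def f_def by auto
  moreover have "localized n f"
    unfolding localized_def
  proof (intro ballI allI impI)
    fix R i k h assume R: "R \<in> profiles n" and i: "i < n" and k: "Suc k < n" and h: "h < n"
      and hn: "h \<notin> {R ! i ! k, R ! i ! Suc k}"
    have "y R i h - y (swap_profile R i k) i h = 0" using lo R i k h hn unfolding eq_local_def by blast
    then have "y R i h = y (swap_profile R i k) i h" by simp
    then show "f R i h = f (swap_profile R i k) i h"
      unfolding f_def using RSD_local[OF R i k] hn by simp
  qed
  moreover have "differs n f (RSD n)"
  proof -
    obtain R i h where R: "R \<in> profiles n" "i < n" "h < n" "y R i h \<noteq> RSD n R i h"
      using assms(2) unfolding differs_def by auto
    have "f R i h - RSD n R i h = t * (y R i h - RSD n R i h)" unfolding f_def by algebra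
    then have "f R i h \<noteq> RSD n R i h" using R(4) t0 by auto
    then show ?thesis using R unfolding differs_def by auto
  qed
  ultimately show ?thesis using t0 unfolding f_def Let_def by blast
qed

end
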